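(* For every dependency DAG $G$ in which every item has at most $k-1$ dependencies and every cache size $k\ge1$, the deterministic online algorithm Recursive LRU (described in the context) is $k$-competitive for online dependency-aware caching without bypassing, i.e., there is a constant $\alpha$ such that for every request sequence $\sigma$, its cost on $\sigma$ is at most $k\cdot\mathrm{OPT}(\sigma)+\alpha$.
   Context: Model: universe $\mathcal{U}$, DAG $G=(\mathcal{U},E)$, $T(x)$ = set of items reachable from $x$ in $G$ including $x$; each item has at most $k-1$ dependencies. A cache of at most $k$ items is feasible if it contains $T(x)$ for every cached $x$. Upon a request to $v$, the algorithm must make $T(v)$ cached by single-item fetches/evictions keeping the cache feasible after each operation; cost = number of fetches. All algorithms start from the same feasible initial cache; $\mathrm{OPT}(\sigma)$ is the optimal offline cost. $\tau$ is a fixed total order on $\mathcal{U}$ with $v<_\tau u$ whenever $v\in T(u)$, $v\neq u$. Algorithm Recursive LRU: it keeps a timestamp for each item, drawn from a strictly increasing global clock. On a request to $v$: first, for each $w\in T(v)$ in decreasing $\tau$-order (top to bottom), assign $w$ the next timestamp (so every item of $T(v)$ gets a more recent timestamp than before, and descendants get more recent timestamps than their ancestors within $T(v)$). Second, for each $w\in T(v)$ in increasing $\tau$-order (bottom to top), if $w$ is not cached: if the cache holds $k$ items, evict the cached item with the least recent timestamp; then fetch $w$. This is the classic LRU rule applied to all items of $T(v)$. *)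

theory Defs
  imports Complex_Main
begin

text \<open>An edge (x, y) in E means that item x directly depends on item y.
  T E x is the set of items reachable from x (including x).\<close>

definition T :: "('a \<times> 'a) set \<Rightarrow> 'a \<Rightarrow> 'a set" where
  "T E x = {y. (x, y) \<in> E\<^sup>*}"

definition feasible :: "('a \<times> 'a) set \<Rightarrow> nat \<Rightarrow> 'a set \<Rightarrow> bool" where
  "feasible E k C \<longleftrightarrow> finite C \<and> card C \<le> k \<and> (\<forall>x\<in>C. T E x \<subseteq> C)"

datatype 'a op = Fetch 'a | Evict 'a

fun apply_op :: "'a op \<Rightarrow> 'a set \<Rightarrow> 'a set" where
  "apply_op (Fetch x) C = insert x C"
| "apply_op (Evict x) C = C - {x}"

fun op_cost :: "'a op \<Rightarrow> nat" where
  "op_cost (Fetch x) = 1"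
| "op_cost (Evict x) = 0"

fun ops_ok :: "('a \<times> 'a) set \<Rightarrow> nat \<Rightarrow> 'a set \<Rightarrow> 'a op list \<Rightarrow> bool" where
  "ops_ok E k C [] = True"
| "ops_ok E k C (p # ps) = (feasible E k (apply_op p C) \<and> ops_ok E k (apply_op p C) ps)"

definition run_ops :: "'a set \<Rightarrow> 'a op list \<Rightarrow> 'a set" where
  "run_ops C ps = fold apply_op ps C"

text \<open>A schedule serves the request sequence: one block of operations per request,
  after which the requested item together with all its dependencies is cached.\<close>
fun serves :: "('a \<times> 'a) set \<Rightarrow> nat \<Rightarrow> 'a set \<Rightarrow> 'a list \<Rightarrow> 'a op list list \<Rightarrow> bool" where
  "serves E k C [] [] = True"
| "serves E k C (v # vs) (ps # pss) =
     (ops_ok E k C ps \<and> T E v \<subseteq> run_ops C ps \<and> serves E k (run_ops C ps) vs pss)"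
| "serves E k C _ _ = False"

definition sched_cost :: "'a op list list \<Rightarrow> nat" where
  "sched_cost pss = (\<Sum>ps\<leftarrow>pss. \<Sum>p\<leftarrow>ps. op_cost p)"

definition OPT :: "('a \<times> 'a) set \<Rightarrow> nat \<Rightarrow> 'a set \<Rightarrow> 'a list \<Rightarrow> nat" where
  "OPT E k C0 \<sigma> = Inf {sched_cost pss | pss. serves E k C0 \<sigma> pss}"

definition strict_total :: "('a \<Rightarrow> 'a \<Rightarrow> bool) \<Rightarrow> bool" where
  "strict_total r \<longleftrightarrow> (\<forall>x. \<not> r x x) \<and> (\<forall>x y z. r x y \<longrightarrow> r y z \<longrightarrow> r x z)
     \<and> (\<forall>x y. x \<noteq> y \<longrightarrow> r x y \<or> r y x)"

text \<open>The items of T(v) listed in increasing tau-order (tau x y means x <_tau y).\<close>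
definition tau_list :: "('a \<times> 'a) set \<Rightarrow> ('a \<Rightarrow> 'a \<Rightarrow> bool) \<Rightarrow> 'a \<Rightarrow> 'a list" where
  "tau_list E tau v = (THE xs. distinct xs \<and> set xs = T E v \<and> sorted_wrt tau xs)"

record 'a lru_state =
  cache :: "'a set"
  stamp :: "'a \<Rightarrow> nat"
  clock :: nat
  cost  :: nat

text \<open>Phase 1: assign fresh timestamps to the items of T(v), top to bottom
  (decreasing tau-order).\<close>
definition stamp_item :: "'a \<Rightarrow> 'a lru_state \<Rightarrow> 'a lru_state" where
  "stamp_item w s = s\<lparr>stamp := (stamp s)(w := clock s), clock := Suc (clock s)\<rparr>"

definition fetch_item :: "nat \<Rightarrow> 'a \<Rightarrow> 'a lru_state \<Rightarrow> 'a lru_state" where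
  "fetch_item k w s =
     (if w \<in> cache s then s
      else let C = (if card (cache s) \<ge> k
                    then cache s - {arg_min (stamp s) (\<lambda>x. x \<in> cache s)}
                    else cache s)
           in s\<lparr>cache := insert w C, cost := Suc (cost s)\<rparr>)"

definition lru_request :: "('a \<times> 'a) set \<Rightarrow> nat \<Rightarrow> ('a \<Rightarrow> 'a \<Rightarrow> bool) \<Rightarrow> 'a \<Rightarrow>
    'a lru_state \<Rightarrow> 'a lru_state" where
  "lru_request E k tau v s =
     (let xs = tau_list E tau v;
          s1 = fold stamp_item (rev xs) s
      in fold (fetch_item k) xs s1)"

definition lru_run :: "('a \<times> 'a) set \<Rightarrow> nat \<Rightarrow> ('a \<Rightarrow> 'a \<Rightarrow> bool) \<Rightarrow> 'a list \<Rightarrow>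
    'a lru_state \<Rightarrow> 'a lru_state" where
  "lru_run E k tau \<sigma> s = fold (lru_request E k tau) \<sigma> s"

definition lru_cost :: "('a \<times> 'a) set \<Rightarrow> nat \<Rightarrow> ('a \<Rightarrow> 'a \<Rightarrow> bool) \<Rightarrow> 'a set \<Rightarrow>
    ('a \<Rightarrow> nat) \<Rightarrow> nat \<Rightarrow> 'a list \<Rightarrow> nat" where
  "lru_cost E k tau C0 ts0 c0 \<sigma> =
     cost (lru_run E k tau \<sigma> \<lparr>cache = C0, stamp = ts0, clock = c0, cost = 0\<rparr>)"

end

theory Submission imports Defs begin

lemma st_irrefl: "strict_total r \<Longrightarrow> \<not> r x x" by (simp add: strict_total_def)
lemma st_trans: "strict_total r \<Longrightarrow> r x y \<Longrightarrow> r y z \<Longrightarrow> r x z" unfolding strict_total_def by blast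
lemma st_total: "strict_total r \<Longrightarrow> x \<noteq> y \<Longrightarrow> r x y \<or> r y x" unfolding strict_total_def by blast
lemma st_asym: "strict_total r \<Longrightarrow> r x y \<Longrightarrow> \<not> r y x" using st_irrefl st_trans by metis

lemma sorted_unique:
  assumes "strict_total r"
  shows "sorted_wrt r xs \<Longrightarrow> sorted_wrt r ys \<Longrightarrow> distinct xs \<Longrightarrow> distinct ys \<Longrightarrow> set xs = set ys \<Longrightarrow> xs = ys"
proof (induction xs arbitrary: ys)
  case Nil thus ?case by simp
next
  case (Cons x xs)
  then obtain y ys' where ys: "ys = y # ys'" by (cases ys) auto
  have "x = y"
  proof (rule ccontr)
    assume ne: "x \<noteq> y"
    hence "x \<in> set ys'" "y \<in> set xs" using Cons.prems ys by auto
    hence "r y x" "r x y" using Cons.prems ys by auto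
    thus False using st_asym[OF assms] by blast
  qed
  moreover have "set xs = set ys'" using Cons.prems ys \<open>x = y\<close> by auto
  ultimately show ?case using Cons ys by auto
qed

lemma sorted_exists:
  assumes "strict_total r" "finite S"
  shows "\<exists>xs. distinct xs \<and> set xs = S \<and> sorted_wrt r xs"
  using assms(2)
proof (induction S rule: finite_induct)
  case empty thus ?case by simp
next
  case (insert x F)
  then obtain xs where xs: "distinct xs" "set xs = F" "sorted_wrt r xs" by blast
  let ?ys = "filter (\<lambda>y. r y x) xs @ x # filter (\<lambda>y. r x y) xs"
  have "set ?ys = insert x F" using xs st_total[OF assms(1), of _ x] by auto
  moreover have "distinct ?ys" using xs st_asym[OF assms(1)] st_irrefl[OF assms(1)] by auto
  moreover have "sorted_wrt r ?ys" using xs st_trans[OF assms(1)]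
    by (auto simp: sorted_wrt_append sorted_wrt_filter)
  ultimately show ?case by blast
qed

lemma tau_list_prop:
  assumes "strict_total tau" "finite (T E v)"
  shows "distinct (tau_list E tau v) \<and> set (tau_list E tau v) = T E v \<and> sorted_wrt tau (tau_list E tau v)"
proof -
  obtain xs where xs: "distinct xs \<and> set xs = T E v \<and> sorted_wrt tau xs"
    using sorted_exists[OF assms] by blast
  have "\<exists>!xs. distinct xs \<and> set xs = T E v \<and> sorted_wrt tau xs"
    using xs sorted_unique[OF assms(1)] by metis
  thus ?thesis unfolding tau_list_def by (rule theI')
qed


lemma stamp_fold:
  "cache (fold stamp_item ys s) = cache s \<and> cost (fold stamp_item ys s) = cost s
   \<and> clock s \<le> clock (fold stamp_item ys s)
   \<and> (\<forall>x. x \<notin> set ys \<longrightarrow> stamp (fold stamp_item ys s) x = stamp s x)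
   \<and> (\<forall>x\<in>set ys. clock s \<le> stamp (fold stamp_item ys s) x \<and> stamp (fold stamp_item ys s) x < clock (fold stamp_item ys s))"
proof (induction ys arbitrary: s)
  case Nil thus ?case by simp
next
  case (Cons y ys)
  let ?s1 = "stamp_item y s"
  have s1: "cache ?s1 = cache s" "cost ?s1 = cost s" "clock ?s1 = Suc (clock s)"
    "stamp ?s1 = (stamp s)(y := clock s)" by (simp_all add: stamp_item_def)
  have IH: "cache (fold stamp_item ys ?s1) = cache ?s1 \<and> cost (fold stamp_item ys ?s1) = cost ?s1
   \<and> clock ?s1 \<le> clock (fold stamp_item ys ?s1)
   \<and> (\<forall>x. x \<notin> set ys \<longrightarrow> stamp (fold stamp_item ys ?s1) x = stamp ?s1 x)
   \<and> (\<forall>x\<in>set ys. clock ?s1 \<le> stamp (fold stamp_item ys ?s1) x \<and> stamp (fold stamp_item ys ?s1) x < clock (fold stamp_item ys ?s1))"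
    by (rule Cons.IH)
  have A: "\<forall>x\<in>set (y#ys). clock s \<le> stamp (fold stamp_item ys ?s1) x \<and> stamp (fold stamp_item ys ?s1) x < clock (fold stamp_item ys ?s1)"
  proof
    fix x assume x: "x \<in> set (y#ys)"
    show "clock s \<le> stamp (fold stamp_item ys ?s1) x \<and> stamp (fold stamp_item ys ?s1) x < clock (fold stamp_item ys ?s1)"
    proof (cases "x \<in> set ys")
      case True thus ?thesis using IH s1(3) by force
    next
      case False hence "x = y" using x by simp
      thus ?thesis using IH s1 False by auto
    qed
  qed
  show ?case using IH s1 A by auto
qed

definition inv :: "nat \<Rightarrow> 'a lru_state \<Rightarrow> bool" where
  "inv k s \<longleftrightarrow> finite (cache s) \<and> card (cache s) \<le> k \<and> (\<forall>x\<in>cache s. stamp s x < clock s)"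

definition PJ :: "nat \<Rightarrow> 'a set \<Rightarrow> nat \<Rightarrow> nat \<Rightarrow> 'a set \<Rightarrow> 'a lru_state \<Rightarrow> bool" where
  "PJ k U c cc F s \<longleftrightarrow> inv k s \<and> c \<le> clock s \<and> F \<subseteq> cache s \<and> F \<subseteq> U \<and> finite F
     \<and> cost s \<le> cc + card F \<and> (\<forall>x\<in>F. c \<le> stamp s x) \<and> (\<forall>x\<in>cache s. c \<le> stamp s x \<longrightarrow> x \<in> U)"

lemma fetch_simps: "stamp (fetch_item k w s) = stamp s" "clock (fetch_item k w s) = clock s"
  by (simp_all add: fetch_item_def Let_def)

lemma fetch_step:
  assumes pj: "PJ k U c cc F s" and w: "w \<in> U" "c \<le> stamp s w" "stamp s w < clock s"
    and U: "finite U" "card U \<le> k" and k: "k \<ge> 1"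
  shows "\<exists>F'. PJ k U c cc F' (fetch_item k w s)"
proof (cases "w \<in> cache s")
  case True thus ?thesis using pj by (auto simp: fetch_item_def)
next
  case False
  have fin: "finite (cache s)" "card (cache s) \<le> k" "\<forall>x\<in>cache s. stamp s x < clock s"
    using pj by (auto simp: PJ_def inv_def)
  have wF: "w \<notin> F" using pj False by (auto simp: PJ_def)
  show ?thesis
  proof (cases "card (cache s) \<ge> k")
    case True
    define a where "a = arg_min (stamp s) (\<lambda>x. x \<in> cache s)"
    have ne: "cache s \<noteq> {}" using True k by auto
    then obtain z where "z \<in> cache s" by blast
    from arg_min_nat_lemma[of "\<lambda>x. x \<in> cache s", OF this]
    have a: "a \<in> cache s" "\<forall>x\<in>cache s. stamp s a \<le> stamp s x" unfolding a_def by auto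
    have aF: "a \<notin> F"
    proof
      assume "a \<in> F"
      hence "c \<le> stamp s a" using pj by (auto simp: PJ_def)
      hence "cache s \<subseteq> U" using a pj by (force simp: PJ_def)
      hence "insert w (cache s) \<subseteq> U" using w by auto
      hence "card (insert w (cache s)) \<le> card U" using U by (simp add: card_mono)
      thus False using False fin True U by simp
    qed
    have eq: "fetch_item k w s = s\<lparr>cache := insert w (cache s - {a}), cost := Suc (cost s)\<rparr>"
      using False True by (simp add: fetch_item_def a_def)
    have "card (insert w (cache s - {a})) = card (cache s)"
      using False a fin by (simp add: card_insert_if) (metis One_nat_def Suc_pred card_gt_0_iff empty_iff)
    hence "PJ k U c cc (insert w F) (fetch_item k w s)"
      using pj aF wF w fin False unfolding eq by (auto simp: PJ_def inv_def)
    thus ?thesis by blast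
  next
    case False2: False
    have eq: "fetch_item k w s = s\<lparr>cache := insert w (cache s), cost := Suc (cost s)\<rparr>"
      using False False2 by (simp add: fetch_item_def)
    have "PJ k U c cc (insert w F) (fetch_item k w s)"
      using pj wF w fin False False2 unfolding eq by (auto simp: PJ_def inv_def)
    thus ?thesis by blast
  qed
qed

lemma fetch_fold:
  assumes "PJ k U c cc F s" "\<forall>w\<in>set xs. w \<in> U \<and> c \<le> stamp s w \<and> stamp s w < clock s"
    "finite U" "card U \<le> k" "k \<ge> 1"
  shows "\<exists>F'. PJ k U c cc F' (fold (fetch_item k) xs s)"
  using assms
proof (induction xs arbitrary: s F)
  case Nil thus ?case by auto
next
  case (Cons x xs)
  obtain F' where "PJ k U c cc F' (fetch_item k x s)" using fetch_step Cons.prems by force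
  thus ?case using Cons.IH[of F' "fetch_item k x s"] Cons.prems by (auto simp: fetch_simps)
qed

lemma request_step:
  assumes pj: "PJ k U c cc F s" and st: "strict_total tau" and fT: "finite (T E v)"
    and TU: "T E v \<subseteq> U" and U: "finite U" "card U \<le> k" and k: "k \<ge> 1"
  shows "\<exists>F'. PJ k U c cc F' (lru_request E k tau v s)"
proof -
  let ?xs = "tau_list E tau v"
  let ?s1 = "fold stamp_item (rev ?xs) s"
  have xs: "set ?xs = T E v" using tau_list_prop[OF st fT] by blast
  note sf = stamp_fold[of "rev ?xs" s]
  have "PJ k U c cc F ?s1"
    using pj sf xs TU unfolding PJ_def inv_def
    apply (intro conjI)
    apply simp_all
    apply (metis less_le_trans set_rev)
    apply (metis le_trans set_rev)
    apply (metis le_trans set_rev subsetD)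
    done
  moreover have "\<forall>w\<in>set ?xs. w \<in> U \<and> c \<le> stamp ?s1 w \<and> stamp ?s1 w < clock ?s1"
    using sf xs TU pj by (auto simp: PJ_def)
  ultimately show ?thesis using fetch_fold U k by (simp add: lru_request_def Let_def)
qed

definition UL :: "('a \<times> 'a) set \<Rightarrow> 'a list \<Rightarrow> 'a set" where
  "UL E L = (\<Union>v\<in>set L. T E v)"

lemma phase:
  assumes "inv k s" "strict_total tau" "\<forall>x. finite (T E x)" "finite (UL E P)" "card (UL E P) \<le> k" "k \<ge> 1"
  shows "inv k (lru_run E k tau P s) \<and> cost (lru_run E k tau P s) \<le> cost s + k"
proof -
  let ?U = "UL E P"
  have "\<forall>Q. set Q \<subseteq> set P \<longrightarrow> (\<forall>s' F. PJ k ?U (clock s) (cost s) F s' \<longrightarrow>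
     (\<exists>F'. PJ k ?U (clock s) (cost s) F' (fold (lru_request E k tau) Q s')))"
  proof
    fix Q show "set Q \<subseteq> set P \<longrightarrow> (\<forall>s' F. PJ k ?U (clock s) (cost s) F s' \<longrightarrow>
     (\<exists>F'. PJ k ?U (clock s) (cost s) F' (fold (lru_request E k tau) Q s')))"
    proof (induction Q)
      case Nil thus ?case by auto
    next
      case (Cons v Q)
      show ?case
      proof (intro impI allI)
        fix s' F assume "set (v#Q) \<subseteq> set P" "PJ k ?U (clock s) (cost s) F s'"
        moreover have "T E v \<subseteq> ?U" using \<open>set (v#Q) \<subseteq> set P\<close> by (auto simp: UL_def)
        ultimately obtain F' where "PJ k ?U (clock s) (cost s) F' (lru_request E k tau v s')"
          using request_step assms by metis
        thus "\<exists>F'. PJ k ?U (clock s) (cost s) F' (fold (lru_request E k tau) (v#Q) s')"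
          using Cons.IH \<open>set (v#Q) \<subseteq> set P\<close> by auto
      qed
    qed
  qed
  moreover have "PJ k ?U (clock s) (cost s) {} s" using assms(1) by (auto simp: PJ_def inv_def)
  ultimately obtain F where F: "PJ k ?U (clock s) (cost s) F (lru_run E k tau P s)"
    unfolding lru_run_def by blast
  hence "card F \<le> card ?U" using assms(4) by (auto simp: PJ_def intro: card_mono)
  thus ?thesis using F assms(5) by (auto simp: PJ_def)
qed


lemma run_ops_Nil[simp]: "run_ops C [] = C" by (simp add: run_ops_def)
lemma run_ops_Cons[simp]: "run_ops C (p#ps) = run_ops (apply_op p C) ps" by (simp add: run_ops_def)

lemma ops_ok_card: "finite C \<Longrightarrow> card C \<le> k \<Longrightarrow> ops_ok E k C ps \<Longrightarrow>
   finite (run_ops C ps) \<and> card (run_ops C ps) \<le> k"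
  by (induction ps arbitrary: C) (auto simp: feasible_def)

lemma zero_ops: "(\<Sum>p\<leftarrow>ps. op_cost p) = 0 \<Longrightarrow> run_ops C ps \<subseteq> C"
proof (induction ps arbitrary: C)
  case Nil thus ?case by simp
next
  case (Cons p ps) thus ?case by (cases p) force+
qed

lemma sched_cost_Nil[simp]: "sched_cost [] = 0" by (simp add: sched_cost_def)
lemma sched_cost_Cons[simp]: "sched_cost (ps # pss) = (\<Sum>p\<leftarrow>ps. op_cost p) + sched_cost pss"
  by (simp add: sched_cost_def)
lemma sched_cost_append[simp]: "sched_cost (a @ b) = sched_cost a + sched_cost b"
  by (simp add: sched_cost_def)

lemma serves_zero: "serves E k D L pss \<Longrightarrow> sched_cost pss = 0 \<Longrightarrow> UL E L \<subseteq> D"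
proof (induction L arbitrary: D pss)
  case Nil thus ?case by (simp add: UL_def)
next
  case (Cons v L)
  then obtain ps pss' where p: "pss = ps # pss'" by (cases pss) auto
  have z: "(\<Sum>p\<leftarrow>ps. op_cost p) = 0" "sched_cost pss' = 0" using Cons.prems p by auto
  have "UL E L \<subseteq> run_ops D ps" using Cons p z by auto
  moreover have "T E v \<subseteq> run_ops D ps" using Cons.prems p by auto
  ultimately show ?case using zero_ops[OF z(1), of D] by (auto simp: UL_def)
qed

lemma serves_split:
  "serves E k D (xs @ ys) pss \<Longrightarrow> finite D \<Longrightarrow> card D \<le> k \<Longrightarrow>
   \<exists>pss1 pss2 D'. pss = pss1 @ pss2 \<and> serves E k D xs pss1 \<and> serves E k D' ys pss2
     \<and> (xs \<noteq> [] \<longrightarrow> T E (last xs) \<subseteq> D') \<and> finite D' \<and> card D' \<le> k"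
proof (induction xs arbitrary: D pss)
  case Nil thus ?case by force
next
  case (Cons x xs)
  then obtain ps pss' where p: "pss = ps # pss'" by (cases pss) auto
  let ?D = "run_ops D ps"
  have h: "ops_ok E k D ps" "T E x \<subseteq> ?D" "serves E k ?D (xs @ ys) pss'" using Cons.prems p by auto
  have fc: "finite ?D" "card ?D \<le> k" using ops_ok_card Cons.prems h(1) by blast+
  obtain pss1 pss2 D' where r: "pss' = pss1 @ pss2" "serves E k ?D xs pss1" "serves E k D' ys pss2"
     "(xs \<noteq> [] \<longrightarrow> T E (last xs) \<subseteq> D')" "finite D'" "card D' \<le> k"
    using Cons.IH[OF h(3) fc] by blast
  show ?case
  proof (cases "xs = []")
    case True
    hence "pss1 = []" using r(2) by (cases pss1) auto
    thus ?thesis using True r h p fc by (intro exI[of _ "[ps]"] exI[of _ pss2] exI[of _ ?D]) auto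
  next
    case False
    thus ?thesis using r h p by (intro exI[of _ "ps # pss1"] exI[of _ pss2] exI[of _ D']) auto
  qed
qed

lemma UL_finite: "\<forall>x. finite (T E x) \<Longrightarrow> finite (UL E L)" by (simp add: UL_def)

lemma lru_run_append: "lru_run E k tau (a @ b) s = lru_run E k tau b (lru_run E k tau a s)"
  by (simp add: lru_run_def)

lemma lemmaA:
  assumes st: "strict_total tau" and fin: "\<forall>x. finite (T E x)" and cT: "\<forall>x. card (T E x) \<le> k"
    and k: "k \<ge> 1"
  shows "inv k s \<Longrightarrow> \<sigma> \<noteq> [] \<Longrightarrow> serves E k D (tl \<sigma>) pss \<Longrightarrow> finite D \<Longrightarrow> card D \<le> k \<Longrightarrow>
    T E (hd \<sigma>) \<subseteq> D \<Longrightarrow> cost (lru_run E k tau \<sigma> s) \<le> cost s + k * sched_cost pss + k"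
proof (induction "length \<sigma>" arbitrary: \<sigma> s D pss rule: less_induct)
  case less
  show ?case
  proof (cases "card (UL E \<sigma>) \<le> k")
    case True
    thus ?thesis using phase[OF less.prems(1) st fin UL_finite[OF fin] True k] by simp
  next
    case False
    define j where "j = (LEAST j. k < card (UL E (take j \<sigma>)))"
    have ex: "k < card (UL E (take (length \<sigma>) \<sigma>))" using False by simp
    have jk: "k < card (UL E (take j \<sigma>))" unfolding j_def using ex by (rule LeastI)
    have jle: "j \<le> length \<sigma>" unfolding j_def using ex by (rule Least_le)
    have jmin: "\<And>i. i < j \<Longrightarrow> card (UL E (take i \<sigma>)) \<le> k"
      unfolding j_def using not_less_Least by (metis not_less)
    obtain v \<sigma>' where vs: "\<sigma> = v # \<sigma>'" using less.prems(2) by (cases \<sigma>) auto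
    have "j \<noteq> 0" proof assume "j = 0" thus False using jk by (simp add: UL_def) qed
    moreover have "j \<noteq> 1" using jk cT vs by (auto simp: UL_def) (metis not_le)
    ultimately have j2: "j \<ge> 2" by simp
    define P where "P = take (j - 1) \<sigma>"
    define r where "r = \<sigma> ! (j - 1)"
    define rest where "rest = drop j \<sigma>"
    have jl: "j - 1 < length \<sigma>" using jle j2 by simp
    have split: "\<sigma> = P @ r # rest" unfolding P_def r_def rest_def using jl j2
      by (metis Suc_diff_1 id_take_nth_drop le_less_trans less_numeral_extra(1) less_2_cases_iff not_less_eq)
    have Pne: "P \<noteq> []" "hd P = v" using j2 vs unfolding P_def by (auto simp: take_Suc_conv_app_nth)
    have Pk: "card (UL E P) \<le> k" unfolding P_def using jmin j2 by simp
    have Prk: "k < card (UL E (P @ [r]))"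
    proof -
      have "take j \<sigma> = P @ [r]" unfolding P_def r_def using jl j2
        by (metis Suc_diff_1 le_less_trans less_numeral_extra(1) take_Suc_conv_app_nth less_2_cases_iff not_less_eq)
      thus ?thesis using jk by simp
    qed
    have tl: "tl \<sigma> = (tl P @ [r]) @ rest" using split Pne by (cases P) auto
    obtain pss1 pss2 D' where sp: "pss = pss1 @ pss2" "serves E k D (tl P @ [r]) pss1"
      "serves E k D' rest pss2" "T E r \<subseteq> D'" "finite D'" "card D' \<le> k"
      using serves_split[of E k D "tl P @ [r]" rest pss] less.prems tl by auto
    have c1: "sched_cost pss1 \<ge> 1"
    proof (rule ccontr)
      assume "\<not> 1 \<le> sched_cost pss1"
      hence "UL E (tl P @ [r]) \<subseteq> D" using serves_zero[OF sp(2)] by simp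
      moreover have "T E (hd P) \<subseteq> D" using less.prems Pne vs by auto
      ultimately have "UL E (P @ [r]) \<subseteq> D" using Pne by (cases P) (auto simp: UL_def)
      hence "card (UL E (P @ [r])) \<le> card D" using less.prems(4) by (simp add: card_mono)
      thus False using Prk less.prems(5) by simp
    qed
    let ?s' = "lru_run E k tau P s"
    have ph: "inv k ?s'" "cost ?s' \<le> cost s + k" using phase[OF less.prems(1) st fin UL_finite[OF fin] Pk k] by auto
    have "length (r # rest) < length \<sigma>" using split Pne by simp
    hence IH: "cost (lru_run E k tau (r # rest) ?s') \<le> cost ?s' + k * sched_cost pss2 + k"
      using less.hyps[of "r # rest" ?s' D' pss2] ph sp by auto
    have "cost (lru_run E k tau \<sigma> s) = cost (lru_run E k tau (r # rest) ?s')"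
      using split lru_run_append by metis
    also have "\<dots> \<le> cost s + k + k * sched_cost pss2 + k" using IH ph by simp
    also have "\<dots> \<le> cost s + k * sched_cost pss + k" using sp(1) c1
      by (simp add: algebra_simps)
    finally show ?thesis .
  qed
qed


lemma T_self: "x \<in> T E x" by (simp add: T_def)
lemma T_trans: "y \<in> T E x \<Longrightarrow> T E y \<subseteq> T E x"
  unfolding T_def by (auto intro: rtrancl_trans)

lemma closed_prefix:
  assumes st: "strict_total tau" and topo: "\<forall>u v. v \<in> T E u \<and> v \<noteq> u \<longrightarrow> tau v u"
    and xs: "sorted_wrt tau xs" "\<forall>x\<in>set xs. T E x \<subseteq> set xs"
    and x: "x \<in> set (take i xs)"
  shows "T E x \<subseteq> set (take i xs)"
proof
  fix y assume y: "y \<in> T E x"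
  show "y \<in> set (take i xs)"
  proof (cases "y = x")
    case True thus ?thesis using x by simp
  next
    case False
    hence tyx: "tau y x" using topo y by blast
    obtain a where a: "a < length xs" "a < i" "xs ! a = x" using x by (auto simp: in_set_conv_nth)
    have "x \<in> set xs" using x by (meson in_set_takeD)
    hence "y \<in> set xs" using xs y by blast
    then obtain b where b: "b < length xs" "xs ! b = y" by (auto simp: in_set_conv_nth)
    have "b < a"
    proof (rule ccontr)
      assume "\<not> b < a"
      moreover have "b \<noteq> a" using a b False by auto
      ultimately have "a < b" by simp
      hence "tau x y" using xs(1) a b by (auto simp: sorted_wrt_iff_nth_less)
      thus False using tyx st_asym[OF st] by blast
    qed
    hence "take i xs ! b = y" "b < length (take i xs)" using a b by auto
    thus ?thesis by (metis nth_mem)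
  qed
qed

lemma prefix_feasible:
  assumes st: "strict_total tau" and topo: "\<forall>u v. v \<in> T E u \<and> v \<noteq> u \<longrightarrow> tau v u"
    and xs: "sorted_wrt tau xs" "\<forall>x\<in>set xs. T E x \<subseteq> set xs" "length xs \<le> k"
  shows "feasible E k (set (take i xs))"
proof -
  have "card (set (take i xs)) \<le> k" using xs(3) card_length[of "take i xs"] by simp
  thus ?thesis using closed_prefix[OF st topo xs(1,2)] by (auto simp: feasible_def)
qed

lemma ops_ok_append: "ops_ok E k C (ps @ qs) = (ops_ok E k C ps \<and> ops_ok E k (run_ops C ps) qs)"
  by (induction ps arbitrary: C) auto

lemma run_ops_append: "run_ops C (ps @ qs) = run_ops (run_ops C ps) qs"
  by (simp add: run_ops_def)

lemma run_fetch: "run_ops C (map Fetch ys) = C \<union> set ys"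
  by (induction ys arbitrary: C) auto
lemma run_evict: "run_ops C (map Evict ys) = C - set ys"
  by (induction ys arbitrary: C) auto

lemma fetch_ok:
  assumes "\<forall>j. feasible E k (set (take j xs))"
  shows "ops_ok E k (set (take i xs)) (map Fetch (drop i xs))"
proof (induction "length xs - i" arbitrary: i)
  case 0 thus ?case by simp
next
  case (Suc n)
  hence il: "i < length xs" by simp
  have d: "drop i xs = xs ! i # drop (Suc i) xs" using il by (simp add: Cons_nth_drop_Suc)
  have t: "insert (xs ! i) (set (take i xs)) = set (take (Suc i) xs)"
    using il by (simp add: take_Suc_conv_app_nth)
  show ?case using Suc.hyps(1)[of "Suc i"] Suc.hyps(2) assms d t by simp
qed

lemma evict_ok:
  assumes "\<forall>j. feasible E k (set (take j xs))" "distinct xs"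
  shows "ops_ok E k (set (take i xs)) (map Evict (rev (take i xs)))"
proof (induction i)
  case 0 thus ?case by simp
next
  case (Suc i)
  show ?case
  proof (cases "i < length xs")
    case False thus ?thesis using Suc by simp
  next
    case True
    have t: "take (Suc i) xs = take i xs @ [xs ! i]" using True by (simp add: take_Suc_conv_app_nth)
    have "distinct (take (Suc i) xs)" using assms(2) by simp
    hence nin: "xs ! i \<notin> set (take i xs)" using t by simp
    have "set (take (Suc i) xs) - {xs ! i} = set (take i xs)" using t nin by auto
    thus ?thesis using Suc t assms(1) by simp
  qed
qed

lemma request_sched:
  assumes st: "strict_total tau" and topo: "\<forall>u v. v \<in> T E u \<and> v \<noteq> u \<longrightarrow> tau v u"
    and fin: "\<forall>x. finite (T E x)" and cT: "\<forall>x. card (T E x) \<le> k" and C: "feasible E k C"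
  shows "\<exists>ps. ops_ok E k C ps \<and> run_ops C ps = T E v"
proof -
  have "finite C" using C by (simp add: feasible_def)
  then obtain xs where xs: "distinct xs" "set xs = C" "sorted_wrt tau xs"
    using sorted_exists[OF st] by blast
  have xl: "length xs \<le> k" using C xs distinct_card[of xs] by (auto simp: feasible_def)
  have fxs: "\<forall>j. feasible E k (set (take j xs))"
    using prefix_feasible[OF st topo xs(3) _ xl] C xs by (auto simp: feasible_def)
  let ?ys = "tau_list E tau v"
  have ys: "distinct ?ys" "set ?ys = T E v" "sorted_wrt tau ?ys"
    using tau_list_prop[OF st] fin by auto
  have yl: "length ?ys \<le> k" using ys cT distinct_card[of ?ys] by metis
  have fys: "\<forall>j. feasible E k (set (take j ?ys))"
    using prefix_feasible[OF st topo ys(3) _ yl] ys T_trans by metis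
  let ?ps = "map Evict (rev xs) @ map Fetch ?ys"
  have e: "ops_ok E k C (map Evict (rev xs))" "run_ops C (map Evict (rev xs)) = {}"
    using evict_ok[OF fxs xs(1), of "length xs"] xs by (auto simp: run_evict)
  have f: "ops_ok E k {} (map Fetch ?ys)" using fetch_ok[OF fys, of 0] by simp
  have "ops_ok E k C ?ps" using e f by (simp add: ops_ok_append)
  moreover have "run_ops C ?ps = T E v" using e ys by (simp add: run_ops_append run_fetch)
  ultimately show ?thesis by blast
qed

lemma ops_ok_feasible: "feasible E k C \<Longrightarrow> ops_ok E k C ps \<Longrightarrow> feasible E k (run_ops C ps)"
  by (induction ps arbitrary: C) auto

lemma serves_exists:
  assumes st: "strict_total tau" and topo: "\<forall>u v. v \<in> T E u \<and> v \<noteq> u \<longrightarrow> tau v u"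
    and fin: "\<forall>x. finite (T E x)" and cT: "\<forall>x. card (T E x) \<le> k"
  shows "feasible E k C \<Longrightarrow> \<exists>pss. serves E k C \<sigma> pss"
proof (induction \<sigma> arbitrary: C)
  case Nil thus ?case by (intro exI[of _ "[]"]) simp
next
  case (Cons v \<sigma>)
  obtain ps where ps: "ops_ok E k C ps" "run_ops C ps = T E v"
    using request_sched[OF st topo fin cT Cons.prems] by blast
  obtain pss where "serves E k (run_ops C ps) \<sigma> pss"
    using Cons.IH ops_ok_feasible[OF Cons.prems ps(1)] by blast
  thus ?case using ps by (intro exI[of _ "ps # pss"]) simp
qed

theorem mainTheorem7:
  fixes E :: "('a \<times> 'a) set" and k :: nat and tau :: "'a \<Rightarrow> 'a \<Rightarrow> bool"
    and C0 :: "'a set" and ts0 :: "'a \<Rightarrow> nat" and c0 :: nat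
  assumes dag: "acyclic E"
    and deps: "\<forall>x. finite (T E x) \<and> card (T E x - {x}) \<le> k - 1"
    and k_pos: "k \<ge> 1"
    and tau_order: "strict_total tau"
    and tau_topo: "\<forall>u v. v \<in> T E u \<and> v \<noteq> u \<longrightarrow> tau v u"
    and init_feasible: "feasible E k C0"
    and init_inj: "inj_on ts0 C0"
    and init_clock: "\<forall>x\<in>C0. ts0 x < c0"
    and init_consistent: "\<forall>x\<in>C0. \<forall>y\<in>T E x. y \<noteq> x \<longrightarrow> ts0 x < ts0 y"
  shows "\<exists>\<alpha>::real. \<forall>\<sigma>::'a list.
           real (lru_cost E k tau C0 ts0 c0 \<sigma>) \<le> real k * real (OPT E k C0 \<sigma>) + \<alpha>"
proof (intro exI allI)
  fix \<sigma> :: "'a list"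
  have fin: "\<forall>x. finite (T E x)" using deps by blast
  have cT: "\<forall>x. card (T E x) \<le> k"
  proof
    fix x
    have "card (T E x - {x}) = card (T E x) - 1" using T_self[of x E] fin by simp
    moreover have "card (T E x) \<ge> 1" using T_self[of x E] fin by (metis One_nat_def Suc_leI card_gt_0_iff empty_iff)
    ultimately show "card (T E x) \<le> k" using deps k_pos by (metis le_diff_iff)
  qed
  define s0 where "s0 = \<lparr>cache = C0, stamp = ts0, clock = c0, cost = 0\<rparr>"
  have inv0: "inv k (s0 :: 'a lru_state)" using init_feasible init_clock by (simp add: s0_def inv_def feasible_def)
  have "lru_cost E k tau C0 ts0 c0 \<sigma> \<le> k * OPT E k C0 \<sigma> + k"
  proof (cases \<sigma>)
    case Nil thus ?thesis by (simp add: lru_cost_def lru_run_def)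
  next
    case (Cons v \<sigma>')
    let ?S = "{sched_cost pss | pss. serves E k C0 \<sigma> pss}"
    have "?S \<noteq> {}" using serves_exists[OF tau_order tau_topo fin cT init_feasible] by blast
    hence "Inf ?S \<in> ?S" by (rule Inf_nat_def1)
    hence "\<exists>pss. serves E k C0 \<sigma> pss \<and> sched_cost pss = OPT E k C0 \<sigma>"
      unfolding OPT_def by auto
    then obtain pss where pss: "serves E k C0 \<sigma> pss" "sched_cost pss = OPT E k C0 \<sigma>" by blast
    then obtain ps pss' where p: "pss = ps # pss'" "ops_ok E k C0 ps" "T E v \<subseteq> run_ops C0 ps"
      "serves E k (run_ops C0 ps) \<sigma>' pss'" using Cons by (cases pss) auto
    have fc: "finite (run_ops C0 ps)" "card (run_ops C0 ps) \<le> k"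
      using ops_ok_card[OF _ _ p(2)] init_feasible by (auto simp: feasible_def)
    have "cost (lru_run E k tau \<sigma> s0) \<le> cost s0 + k * sched_cost pss' + k"
      using lemmaA[OF tau_order fin cT k_pos inv0, of \<sigma> "run_ops C0 ps" pss'] Cons p fc by simp
    moreover have "sched_cost pss' \<le> sched_cost pss" using p by simp
    ultimately show ?thesis using pss unfolding lru_cost_def s0_def[symmetric]
      by (simp add: s0_def) (meson add_le_mono1 le_trans mult_le_mono2)
  qed
  hence "real (lru_cost E k tau C0 ts0 c0 \<sigma>) \<le> real (k * OPT E k C0 \<sigma> + k)" by linarith
  thus "real (lru_cost E k tau C0 ts0 c0 \<sigma>) \<le> real k * real (OPT E k C0 \<sigma>) + real k" by simp
qed

end
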